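(* Let $p$ be an odd prime, $n$ a positive integer with $\gcd(n,p)=1$, and let $S$ be a uniquely negacyclic subspace of $\mathbb{F}_p^n\times\mathbb{F}_p^n$ with generating pair $(g,f)$. Then $S$ is totally isotropic if and only if $$g(X)f(X^{-1})=f(X)g(X^{-1})\mod X^n+1.$$ Further, an element $(\mathbf{a},\mathbf{b})\in\mathbb{F}_p^n\times\mathbb{F}_p^n$ lies in $S^{\perp}$ if and only if $$a(X)f(X^{-1})=b(X)g(X^{-1})\mod X^n+1.$$
   Context: Let $N:\mathbb{F}_p^n\to\mathbb{F}_p^n$ be $(u_0,\dots,u_{n-1})\mapsto(-u_{n-1},u_0,\dots,u_{n-2})$; a subspace $S$ is simultaneously negacyclic if $(\mathbf{a},\mathbf{b})\in S$ implies $(N\mathbf{a},N\mathbf{b})\in S$. Let $\mathcal{R}=\mathbb{F}_p[X]/\langle X^n+1\rangle$, with vectors $(a_0,\dots,a_{n-1})$ identified with $a(X)=\sum a_iX^i\in\mathcal{R}$; in $\mathcal{R}$, $X^{-1}=-X^{n-1}$ and $a(X^{-1})$ denotes substitution. For a simultaneously negacyclic $S$, let $F=\{\mathbf{a}:(\mathbf{a},\mathbf{b})\in S\}$ (an ideal of $\mathcal{R}$) and $g$ its monic generator dividing $X^n+1$; $S$ is uniquely negacyclic if there is a unique $f\in\mathcal{R}$ with $(g,f)\in S$, and $(g,f)$ is its generating pair. The symplectic inner product is $\langle(\mathbf{a},\mathbf{b}),(\mathbf{c},\mathbf{d})\rangle_s=\mathbf{a}^T\mathbf{d}-\mathbf{b}^T\mathbf{c}$;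 $S$ is totally isotropic if it vanishes on $S\times S$; $S^\perp$ is the symplectic dual of $S$. *)

theory Defs
  imports "HOL-Computational_Algebra.Polynomial"
begin

text \<open>Vectors in F^n are lists of length n; the field F_p is a finite field type of prime cardinality p.\<close>

definition vecs :: "nat \<Rightarrow> 'a list set" where
  "vecs n = {v. length v = n}"

definition pair_space :: "nat \<Rightarrow> ('a list \<times> 'a list) set" where
  "pair_space n = vecs n \<times> vecs n"

definition negashift :: "'a::ring_1 list \<Rightarrow> 'a list" where
  "negashift u = (if u = [] then [] else (- last u) # butlast u)"

definition vadd :: "'a::ring_1 list \<Rightarrow> 'a list \<Rightarrow> 'a list" where
  "vadd u v = map2 (+) u v"

definition vscale :: "'a::ring_1 \<Rightarrow> 'a list \<Rightarrow> 'a list" where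
  "vscale c u = map ((*) c) u"

definition dotp :: "'a::ring_1 list \<Rightarrow> 'a list \<Rightarrow> 'a" where
  "dotp u v = sum_list (map2 (*) u v)"

definition pair_subspace :: "nat \<Rightarrow> ('a::field list \<times> 'a list) set \<Rightarrow> bool" where
  "pair_subspace n S \<longleftrightarrow> S \<subseteq> pair_space n \<and> (replicate n 0, replicate n 0) \<in> S \<and>
     (\<forall>x\<in>S. \<forall>y\<in>S. (vadd (fst x) (fst y), vadd (snd x) (snd y)) \<in> S) \<and>
     (\<forall>c. \<forall>x\<in>S. (vscale c (fst x), vscale c (snd x)) \<in> S)"

definition simult_negacyclic :: "nat \<Rightarrow> ('a::field list \<times> 'a list) set \<Rightarrow> bool" where
  "simult_negacyclic n S \<longleftrightarrow> pair_subspace n S \<and>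
     (\<forall>a b. (a, b) \<in> S \<longrightarrow> (negashift a, negashift b) \<in> S)"

definition xn1 :: "nat \<Rightarrow> 'a::comm_ring_1 poly" where
  "xn1 n = monom 1 n + 1"

definition vec_of :: "nat \<Rightarrow> 'a::field poly \<Rightarrow> 'a list" where
  "vec_of n r = map (coeff (r mod xn1 n)) [0..<n]"

text \<open>Substitution a(X^{-1}), with X^{-1} = -X^{n-1} in R.\<close>
definition subst_inv :: "nat \<Rightarrow> 'a::comm_ring_1 poly \<Rightarrow> 'a poly" where
  "subst_inv n a = pcompose a (- monom 1 (n - 1))"

definition is_generator :: "nat \<Rightarrow> ('a::field list \<times> 'a list) set \<Rightarrow> 'a poly \<Rightarrow> bool" where
  "is_generator n S g \<longleftrightarrow> lead_coeff g = 1 \<and> g dvd xn1 n \<and>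
     fst ` S = {vec_of n (h * g) | h. True}"

text \<open>S is uniquely negacyclic with generating pair (g,f): f (an element of R, represented
  by its reduced polynomial of degree < n) is the unique element with (g,f) in S.\<close>
definition generating_pair :: "nat \<Rightarrow> ('a::field list \<times> 'a list) set \<Rightarrow> 'a poly \<Rightarrow> 'a poly \<Rightarrow> bool" where
  "generating_pair n S g f \<longleftrightarrow> simult_negacyclic n S \<and> is_generator n S g \<and>
     degree f < n \<and> (vec_of n g, vec_of n f) \<in> S \<and>
     (\<forall>f'. degree f' < n \<longrightarrow> (vec_of n g, vec_of n f') \<in> S \<longrightarrow> f' = f)"

definition symp :: "('a::ring_1 list \<times> 'a list) \<Rightarrow> ('a list \<times> 'a list) \<Rightarrow> 'a" where
  "symp x y = dotp (fst x) (snd y) - dotp (snd x) (fst y)"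

definition totally_isotropic :: "('a::ring_1 list \<times> 'a list) set \<Rightarrow> bool" where
  "totally_isotropic S \<longleftrightarrow> (\<forall>x\<in>S. \<forall>y\<in>S. symp x y = 0)"

definition symp_dual :: "nat \<Rightarrow> ('a::ring_1 list \<times> 'a list) set \<Rightarrow> ('a list \<times> 'a list) set" where
  "symp_dual n S = {x \<in> pair_space n. \<forall>y\<in>S. symp x y = 0}"

end

theory Submission
  imports Defs "HOL-Number_Theory.Cong"
begin

lemma xn1_degree: "n > 0 \<Longrightarrow> degree (xn1 n :: 'a::field poly) = n"
  unfolding xn1_def by (simp add: degree_add_eq_left degree_monom_eq)

lemma xn1_nz: "n > 0 \<Longrightarrow> xn1 n \<noteq> (0::'a::field poly)"
  using xn1_degree[of n] by (metis degree_0 less_irrefl)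

lemma deg_mod_xn1: "n > 0 \<Longrightarrow> degree ((u::'a::field poly) mod xn1 n) < n"
proof -
  assume n: "n > 0"
  have "degree (xn1 n :: 'a poly) = n" using xn1_degree n by blast
  moreover have "xn1 n \<noteq> (0::'a poly)" using xn1_nz n by blast
  ultimately show ?thesis using degree_mod_less[of "xn1 n" u] n by auto
qed

lemma Poly_map_coeff: "degree (q::'a::field poly) < n \<Longrightarrow> Poly (map (coeff q) [0..<n]) = q"
  by (rule poly_eqI) (auto simp: nth_default_def coeff_eq_0)

lemma Poly_vec_of: "n > 0 \<Longrightarrow> Poly (vec_of n u) = u mod xn1 n"
  unfolding vec_of_def using Poly_map_coeff deg_mod_xn1 by blast

lemma length_vec_of[simp]: "length (vec_of n u) = n"
  by (simp add: vec_of_def)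

lemma degree_Poly_less: "length a = n \<Longrightarrow> n > 0 \<Longrightarrow> degree (Poly a) < n"
proof -
  assume a: "length a = n" "n > 0"
  have "degree (Poly a) \<le> n - 1"
    by (rule degree_le) (use a in \<open>auto simp: nth_default_def\<close>)
  thus ?thesis using a by linarith
qed

lemma vec_of_Poly: "length a = n \<Longrightarrow> n > 0 \<Longrightarrow> vec_of n (Poly (a::'a::field list)) = a"
proof -
  assume a: "length a = n" "n > 0"
  have "Poly a mod xn1 n = Poly a"
    using a by (simp add: mod_poly_less degree_Poly_less xn1_degree)
  thus ?thesis using a unfolding vec_of_def
    by (intro nth_equalityI) (auto simp: nth_default_def)
qed

lemma vec_of_eq_iff: "n > 0 \<Longrightarrow> vec_of n u = vec_of n v \<longleftrightarrow> u mod xn1 n = (v::'a::field poly) mod xn1 n"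
  by (metis Poly_vec_of vec_of_def)

lemma vec_of_mod: "vec_of n (u mod xn1 n) = vec_of n u"
  by (simp add: vec_of_def)

lemma vec_of_add: "vadd (vec_of n u) (vec_of n v) = vec_of n (u + v)"
  unfolding vadd_def vec_of_def
  by (intro nth_equalityI) (auto simp: poly_mod_add_left)

lemma vec_of_smult: "vscale c (vec_of n u) = vec_of n (smult c u)"
  unfolding vscale_def vec_of_def
  by (intro nth_equalityI) (auto simp: mod_smult_left)

lemma vec_of_0: "vec_of n 0 = replicate n 0"
  unfolding vec_of_def by (intro nth_equalityI) auto

lemma negashift_vec_of:
  assumes n: "n > 0"
  shows "negashift (vec_of n u) = vec_of n (pCons 0 (u::'a::field poly))"
proof -
  define m where "m = (xn1 n :: 'a poly)"
  define q where "q = u mod m"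
  define c where "c = coeff q (n-1)"
  define r where "r = pCons 0 q - smult c m"
  have dq: "degree q < n" unfolding q_def m_def using deg_mod_xn1 n by blast
  have cm: "coeff m i = (if i = n then 1 else 0) + (if i = 0 then 1 else 0)" for i
    unfolding m_def xn1_def by (simp add: coeff_monom)
  have cr: "coeff r i = (case i of 0 \<Rightarrow> 0 | Suc j \<Rightarrow> coeff q j) - c * coeff m i" for i
    unfolding r_def by (simp add: coeff_pCons)
  have "degree r \<le> n - 1"
  proof (rule degree_le, intro allI impI)
    fix i assume i: "n - 1 < i"
    show "coeff r i = 0"
    proof (cases "i = n")
      case True thus ?thesis using n unfolding cr cm c_def by (cases i) auto
    next
      case False
      then obtain j where j: "i = Suc j" "j \<ge> n" using i n by (cases i) auto
      thus ?thesis using dq False n unfolding cr cm by (auto simp: coeff_eq_0)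
    qed
  qed
  moreover have "degree m = n" unfolding m_def using xn1_degree n by blast
  ultimately have dr: "degree r < degree m" using n by simp
  have "pCons 0 q + pCons 0 (u div m) * m = pCons 0 (q + (u div m) * m)"
    by simp
  also have "q + (u div m) * m = u" unfolding q_def by simp
  finally have h: "pCons 0 u = pCons 0 q + pCons 0 (u div m) * m" by simp
  have "pCons 0 u mod m = pCons 0 q mod m" unfolding h by (metis mod_mult_self1 mod_mult_self2 mult.commute)
  also have "pCons 0 q = r + smult c m" unfolding r_def by simp
  also have "(r + smult c m) mod m = r" using dr
    by (simp add: poly_mod_add_left mod_smult_left mod_poly_less)
  finally have e: "pCons 0 u mod m = r" .
  obtain k where nk: "n = Suc k" using n by (cases n) auto
  have "vec_of n (pCons 0 u) = map (coeff r) [0..<n]" unfolding vec_of_def e[unfolded m_def] ..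
  also have "\<dots> = coeff r 0 # map (\<lambda>j. coeff r (Suc j)) [0..<k]"
    unfolding nk by (simp add: upt_conv_Cons map_Suc_upt[symmetric] del: upt_Suc)
  also have "\<dots> = (- c) # map (coeff q) [0..<k]"
    using nk by (auto simp: cr cm)
  finally have A: "vec_of n (pCons 0 u) = (- c) # map (coeff q) [0..<k]" .
  have "vec_of n u = map (coeff q) [0..<n]" unfolding vec_of_def q_def m_def by simp
  hence B: "vec_of n u = map (coeff q) [0..<k] @ [c]"
    unfolding c_def nk by simp
  show ?thesis unfolding A B negashift_def by simp
qed

lemma pcompose_monom': "pcompose (monom c j) q = smult c (q ^ j)"
  by (induction j) (auto simp: monom_Suc pcompose_pCons monom_0 pcompose_const)

lemma monom_mult_eq: "monom (1::'a::comm_ring_1) i * monom 1 j = monom 1 (i + j)"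
  by (simp add: mult_monom)

lemma xn_cong: "[monom 1 (n * k) = ((-1)^k :: 'a::field poly)] (mod xn1 n)"
proof -
  have "[monom 1 n = (-1 :: 'a poly)] (mod xn1 n)"
    unfolding cong_iff_dvd_diff xn1_def by simp
  hence "[(monom 1 n)^k = ((-1)^k :: 'a poly)] (mod xn1 n)" by (rule cong_pow)
  thus ?thesis by (simp add: monom_power)
qed

lemma Y_pow: "(- monom 1 (n - 1)) ^ j = ((-1)^j :: 'a::field poly) * monom 1 ((n-1)*j)"
  by (subst power_minus) (simp add: monom_power)

lemma iota_xn1: assumes "n > 0" shows "xn1 n dvd subst_inv n (xn1 n :: 'a::field poly)"
proof -
  have e: "subst_inv n (xn1 n :: 'a poly) = (-1)^n * monom 1 (n * (n-1)) + 1"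
  proof -
    have "subst_inv n (xn1 n :: 'a poly) = (- monom 1 (n - 1)) ^ n + 1"
      unfolding subst_inv_def xn1_def by (simp add: pcompose_add pcompose_monom' pcompose_1)
    also have "\<dots> = (-1)^n * monom 1 ((n - 1) * n) + 1" by (simp only: Y_pow)
    also have "(n - 1) * n = n * (n - 1)" by (rule mult.commute)
    finally show ?thesis .
  qed
  have "[(-1)^n * monom 1 (n * (n-1)) + 1 = (-1)^n * (-1)^(n-1) + (1::'a poly)] (mod xn1 n)"
    by (intro cong_add cong_mult cong_refl xn_cong)
  moreover have "(-1)^n * (-1)^(n-1) = (-1 :: 'a poly)"
  proof -
    have "(-1)^n * (-1)^(n-1) = (-1 :: 'a poly)^(n + (n-1))" by (simp add: power_add)
    moreover have "odd (n + (n - 1))" using assms by presburger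
    ultimately show ?thesis by simp
  qed
  ultimately have "[subst_inv n (xn1 n :: 'a poly) = 0] (mod xn1 n)" unfolding e by simp
  thus ?thesis by (simp add: cong_0_iff)
qed

lemma iota_cong:
  assumes "n > 0" "[u = v] (mod xn1 n)"
  shows "[subst_inv n u = subst_inv n (v::'a::field poly)] (mod xn1 n)"
proof -
  obtain k where k: "u - v = xn1 n * k" using assms(2) unfolding cong_iff_dvd_diff by blast
  have "subst_inv n u - subst_inv n v = subst_inv n (xn1 n) * subst_inv n k"
    unfolding subst_inv_def by (simp add: pcompose_diff[symmetric] k pcompose_mult)
  hence "xn1 n dvd subst_inv n u - subst_inv n v" using iota_xn1[OF assms(1)] dvd_mult2 by metis
  thus ?thesis unfolding cong_iff_dvd_diff .
qed

lemma subst_inv_mult: "subst_inv n (u * v) = subst_inv n u * subst_inv n v"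
  unfolding subst_inv_def by (simp add: pcompose_mult)

lemma cong_mod_low:
  assumes "n > 0" "[a = b] (mod xn1 n)" "degree b < n"
  shows "a mod xn1 n = (b::'a::field poly)"
proof -
  have "degree b < degree (xn1 n :: 'a poly)" using assms xn1_degree by metis
  thus ?thesis using assms(2) unfolding cong_def by (simp add: mod_poly_less)
qed

lemma E_lemma:
  assumes n: "n > 0" and i: "i < n" and j: "j < n"
  shows "coeff ((monom 1 i * (- monom 1 (n - 1)) ^ j) mod xn1 n) 0 = (if i = j then 1 else (0::'a::field))"
proof (cases "j = 0")
  case True
  have mi: "(monom 1 i :: 'a poly) mod xn1 n = monom 1 i"
    by (rule mod_poly_less) (simp add: degree_monom_eq xn1_degree n i)
  thus ?thesis unfolding True power_0 mult_1_right mi by (simp add: coeff_monom)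
next
  case False
  have ar: "i + (n-1)*j = n*(j-1) + (n - j + i)"
  proof -
    obtain j' where "j = Suc j'" using False by (cases j) auto
    moreover obtain n' where "n = Suc n'" using n by (cases n) auto
    ultimately show ?thesis using j by (simp add: algebra_simps)
  qed
  have "monom 1 i * (- monom 1 (n - 1)) ^ j = (-1)^j * (monom 1 (n*(j-1)) * monom (1::'a) (n - j + i))"
  proof -
    have "monom 1 i * (- monom 1 (n - 1)) ^ j = (-1)^j * (monom 1 i * monom (1::'a) ((n-1)*j))"
      by (simp only: Y_pow mult.left_commute)
    also have "monom 1 i * monom (1::'a) ((n-1)*j) = monom 1 (i + (n-1)*j)" by (simp add: mult_monom)
    also have "\<dots> = monom 1 (n*(j-1)) * monom (1::'a) (n - j + i)" unfolding ar by (simp add: mult_monom)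
    finally show ?thesis .
  qed
  moreover have "[(-1)^j * (monom 1 (n*(j-1)) * monom (1::'a) (n - j + i))
      = (-1)^j * ((-1)^(j-1) * monom 1 (n - j + i))] (mod xn1 n)"
    by (intro cong_mult cong_refl xn_cong)
  moreover have "(-1)^j * ((-1)^(j-1) * monom 1 (n - j + i)) = - monom (1::'a) (n - j + i)"
  proof -
    have "(-1)^j * (-1)^(j-1) = (-1 :: 'a poly)^(j + (j-1))" by (simp add: power_add)
    moreover have "odd (j + (j - 1))" using False by presburger
    ultimately show ?thesis by (simp add: mult.assoc[symmetric])
  qed
  ultimately have c1: "[monom 1 i * (- monom 1 (n - 1)) ^ j = - monom (1::'a) (n - j + i)] (mod xn1 n)"
    by simp
  show ?thesis
  proof (cases "i < j")
    case True
    have "degree (- monom (1::'a) (n - j + i)) < n" using True j by (simp add: degree_monom_eq)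
    from cong_mod_low[OF n c1 this] show ?thesis using True False j by simp
  next
    case False
    have "n - j + i = n * 1 + (i - j)" using False j by simp
    hence "- monom (1::'a) (n - j + i) = - (monom 1 (n*1) * monom 1 (i - j))" by (simp add: mult_monom)
    moreover have "[- (monom 1 (n*1) * monom 1 (i - j)) = - ((-1)^1 * monom (1::'a) (i - j))] (mod xn1 n)"
      by (intro cong_minus_minus_iff[THEN iffD2] cong_mult cong_refl xn_cong)
    ultimately have "[monom 1 i * (- monom 1 (n - 1)) ^ j = monom (1::'a) (i - j)] (mod xn1 n)"
      using c1 cong_trans by fastforce
    moreover have "degree (monom (1::'a) (i - j)) < n" using i by (simp add: degree_monom_eq)
    ultimately show ?thesis using cong_mod_low[OF n] False by fastforce
  qed
qed

lemma dotp_map: "dotp (map F [0..<n]) (map G [0..<n]) = (\<Sum>i<n. F i * G i)"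
  by (induction n) (simp_all add: dotp_def)

lemma poly_sum_lt: "degree (q::'a::field poly) < n \<Longrightarrow> q = (\<Sum>i<n. monom (coeff q i) i)"
  by (rule poly_eqI) (auto simp: coeff_sum coeff_monom coeff_eq_0)

lemma poly_mod_sum: "(sum f A) mod (m::'a::field poly) = (\<Sum>i\<in>A. f i mod m)"
  by (induction A rule: infinite_finite_induct) (simp_all add: poly_mod_add_left)

lemma dot_lemma:
  assumes n: "n > 0"
  shows "dotp (vec_of n u) (vec_of n v) = coeff ((u * subst_inv n v) mod xn1 n) (0::nat)"
proof -
  define m where "m = (xn1 n :: 'a::field poly)"
  define u' where "u' = u mod m"
  define v' where "v' = v mod m"
  define Y where "Y = (- monom 1 (n - 1) :: 'a poly)"
  have du: "degree u' < n" and dv: "degree v' < n" unfolding u'_def v'_def m_def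
    using deg_mod_xn1 n by blast+
  have L: "dotp (vec_of n u) (vec_of n v) = (\<Sum>i<n. coeff u' i * coeff v' i)"
    unfolding vec_of_def dotp_map u'_def v'_def m_def ..
  have "[u * subst_inv n v = u' * subst_inv n v'] (mod m)"
  proof (rule cong_mult)
    show "[u = u'] (mod m)" unfolding u'_def cong_def by simp
    have "[v = v'] (mod m)" unfolding v'_def cong_def by simp
    thus "[subst_inv n v = subst_inv n v'] (mod m)" unfolding m_def using iota_cong n by blast
  qed
  hence R1: "(u * subst_inv n v) mod m = (u' * subst_inv n v') mod m" unfolding cong_def .
  have su: "u' = (\<Sum>i<n. smult (coeff u' i) (monom 1 i))"
    using poly_sum_lt[OF du] by (simp add: smult_monom)
  have sv: "subst_inv n v' = (\<Sum>j<n. smult (coeff v' j) (Y ^ j))"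
    apply (subst poly_sum_lt[OF dv])
    by (simp add: subst_inv_def pcompose_sum pcompose_monom' Y_def)
  have "u' * subst_inv n v' = (\<Sum>i<n. \<Sum>j<n. smult (coeff u' i * coeff v' j) (monom 1 i * Y ^ j))"
    apply (subst su, subst sv)
    by (simp add: sum_product mult_smult_left mult_smult_right mult.commute)
  hence "coeff ((u' * subst_inv n v') mod m) 0
      = (\<Sum>i<n. \<Sum>j<n. coeff u' i * coeff v' j * coeff ((monom 1 i * Y ^ j) mod m) 0)"
    by (simp add: poly_mod_sum mod_smult_left coeff_sum)
  also have "\<dots> = (\<Sum>i<n. \<Sum>j<n. coeff u' i * coeff v' j * (if i = j then 1 else 0))"
    unfolding Y_def m_def by (intro sum.cong refl, subst E_lemma[OF n], auto)
  also have "\<dots> = (\<Sum>i<n. coeff u' i * coeff v' i)"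
    by (simp add: if_distrib cong: if_cong)
  finally show ?thesis using L R1 unfolding m_def by simp
qed

lemma K_lemma:
  assumes n: "n > 0" and h: "\<And>h. coeff ((subst_inv n h * W) mod xn1 n) 0 = (0::'a::field)"
  shows "W mod xn1 n = 0"
proof (rule poly_eqI)
  fix k
  show "coeff (W mod xn1 n) k = coeff 0 k"
  proof (cases "k < n")
    case False
    thus ?thesis using deg_mod_xn1[OF n, of W] by (simp add: coeff_eq_0)
  next
    case True
    have mk: "(monom 1 k :: 'a poly) mod xn1 n = monom 1 k"
      by (rule mod_poly_less) (simp add: degree_monom_eq xn1_degree n True)
    have "0 = coeff ((W * subst_inv n (monom 1 k)) mod xn1 n) 0" using h[of "monom 1 k"]
      by (simp add: mult.commute)
    also have "\<dots> = dotp (vec_of n W) (vec_of n (monom 1 k))" by (rule dot_lemma[OF n, symmetric])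
    also have "\<dots> = (\<Sum>i<n. coeff (W mod xn1 n) i * (if k = i then 1 else 0))"
      unfolding vec_of_def dotp_map mk by (simp add: coeff_monom)
    also have "\<dots> = coeff (W mod xn1 n) k" using True by (simp add: if_distrib cong: if_cong)
    finally show ?thesis by simp
  qed
qed

lemma ps_scale:
  assumes "pair_subspace n S" "(a, b) \<in> S"
  shows "(vscale c a, vscale c b) \<in> S"
proof -
  have "\<forall>c. \<forall>x\<in>S. (vscale c (fst x), vscale c (snd x)) \<in> S"
    using assms(1) unfolding pair_subspace_def by blast
  from this[rule_format, of "(a, b)" c] assms(2) show ?thesis by simp
qed

lemma ps_add:
  assumes "pair_subspace n S" "(a, b) \<in> S" "(c, d) \<in> S"
  shows "(vadd a c, vadd b d) \<in> S"
proof -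
  have "\<forall>x\<in>S. \<forall>y\<in>S. (vadd (fst x) (fst y), vadd (snd x) (snd y)) \<in> S"
    using assms(1) unfolding pair_subspace_def by blast
  from this[rule_format, of "(a, b)" "(c, d)"] assms(2,3) show ?thesis by simp
qed

lemma C1:
  assumes n: "n > 0" and G: "generating_pair n S g f"
  shows "(vec_of n (h * g), vec_of n (h * f)) \<in> (S :: ('a::field list \<times> 'a list) set)"
proof (induction h)
  case 0
  have "(replicate n 0, replicate n (0::'a)) \<in> S"
    using G unfolding generating_pair_def simult_negacyclic_def pair_subspace_def by blast
  thus ?case by (simp add: vec_of_0)
next
  case (pCons c h)
  have base: "(vec_of n g, vec_of n f) \<in> S" using G unfolding generating_pair_def by blast
  have sub: "pair_subspace n S" and neg: "\<forall>a b. (a, b) \<in> S \<longrightarrow> (negashift a, negashift b) \<in> S"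
    using G unfolding generating_pair_def simult_negacyclic_def by blast+
  have A: "(vscale c (vec_of n g), vscale c (vec_of n f)) \<in> S"
    using ps_scale[OF sub base] .
  have B: "(negashift (vec_of n (h * g)), negashift (vec_of n (h * f))) \<in> S"
    using neg pCons.IH by blast
  have "(vadd (vscale c (vec_of n g)) (negashift (vec_of n (h * g))),
         vadd (vscale c (vec_of n f)) (negashift (vec_of n (h * f)))) \<in> S"
    using ps_add[OF sub A B] .
  thus ?case by (simp add: vec_of_smult negashift_vec_of[OF n] vec_of_add mult_pCons_left)
qed

lemma C2:
  assumes n: "n > 0" and G: "generating_pair n S g f" and ab: "(a, b) \<in> (S :: ('a::field list \<times> 'a list) set)"
  shows "\<exists>h. a = vec_of n (h * g) \<and> b = vec_of n (h * f)"
proof -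
  have sub: "pair_subspace n S" using G unfolding generating_pair_def simult_negacyclic_def by blast
  have base: "(vec_of n g, vec_of n f) \<in> S" and df: "degree f < n"
    and uniq: "\<And>f'. degree f' < n \<Longrightarrow> (vec_of n g, vec_of n f') \<in> S \<Longrightarrow> f' = f"
    using G unfolding generating_pair_def by blast+
  have "a \<in> fst ` S" using ab by force
  then obtain h where ah: "a = vec_of n (h * g)"
    using G unfolding generating_pair_def is_generator_def by blast
  have lb: "length b = n" using sub ab unfolding pair_subspace_def pair_space_def vecs_def by auto
  have z: "(vec_of n (h * g), vec_of n (h * f)) \<in> S" using C1[OF n G] .
  have z2: "(vscale (-1) (vec_of n (h * g)), vscale (-1) (vec_of n (h * f))) \<in> S"
    using ps_scale[OF sub z] .
  have z3: "(vadd a (vscale (-1) (vec_of n (h * g))), vadd b (vscale (-1) (vec_of n (h * f)))) \<in> S"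
    using ps_add[OF sub ab z2] .
  have z4: "(vadd (vec_of n g) (vadd a (vscale (-1) (vec_of n (h * g)))),
             vadd (vec_of n f) (vadd b (vscale (-1) (vec_of n (h * f))))) \<in> S"
    using ps_add[OF sub base z3] .
  define f' where "f' = (f + (Poly b + smult (-1) (h * f))) mod xn1 n"
  have e1: "vadd (vec_of n g) (vadd a (vscale (-1) (vec_of n (h * g)))) = vec_of n g"
    unfolding ah by (simp add: vec_of_smult vec_of_add)
  have e2: "vadd (vec_of n f) (vadd b (vscale (-1) (vec_of n (h * f)))) = vec_of n f'"
  proof -
    have e2': "vadd (vec_of n f) (vadd (vec_of n (Poly b)) (vscale (-1) (vec_of n (h * f))))
       = vec_of n (f + (Poly b + smult (-1) (h * f)))" by (simp only: vec_of_smult vec_of_add)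
    show ?thesis unfolding f'_def vec_of_mod using e2' unfolding vec_of_Poly[OF lb n] .
  qed
  have "degree f' < n" unfolding f'_def using deg_mod_xn1 n by blast
  hence "f' = f" using uniq z4 e1 e2 by simp
  moreover have "f mod xn1 n = f"
    by (rule mod_poly_less) (simp add: xn1_degree n df)
  ultimately have "(Poly b + smult (-1) (h * f)) mod xn1 n = 0"
    unfolding f'_def by (simp add: poly_mod_add_left)
  hence "Poly b mod xn1 n = (h * f) mod xn1 n"
    by (simp add: poly_mod_diff_left)
  hence "vec_of n (Poly b) = vec_of n (h * f)" using vec_of_eq_iff[OF n] by blast
  hence "b = vec_of n (h * f)" using vec_of_Poly[OF lb n] by simp
  thus ?thesis using ah by blast
qed

lemma C3:
  assumes n: "n > 0" and G: "generating_pair n S g f" and la: "length a = n" and lb: "length b = n"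
  shows "(a, b) \<in> symp_dual n (S :: ('a::field list \<times> 'a list) set) \<longleftrightarrow>
    (Poly a * subst_inv n f) mod xn1 n = (Poly b * subst_inv n g) mod xn1 n"
proof -
  define W where "W = Poly a * subst_inv n f - Poly b * subst_inv n g"
  have sy: "symp (a, b) (vec_of n (h * g), vec_of n (h * f)) = coeff ((subst_inv n h * W) mod xn1 n) 0" for h
  proof -
    have "symp (a, b) (vec_of n (h * g), vec_of n (h * f))
        = dotp (vec_of n (Poly a)) (vec_of n (h * f)) - dotp (vec_of n (Poly b)) (vec_of n (h * g))"
      unfolding symp_def using vec_of_Poly[OF la n] vec_of_Poly[OF lb n] by simp
    also have "\<dots> = coeff ((Poly a * subst_inv n (h * f)) mod xn1 n) 0 - coeff ((Poly b * subst_inv n (h * g)) mod xn1 n) 0"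
      by (simp only: dot_lemma[OF n])
    also have "\<dots> = coeff ((Poly a * subst_inv n (h * f) - Poly b * subst_inv n (h * g)) mod xn1 n) 0"
      by (simp add: poly_mod_diff_left)
    also have "Poly a * subst_inv n (h * f) - Poly b * subst_inv n (h * g) = subst_inv n h * W"
      unfolding W_def subst_inv_mult by (simp add: algebra_simps)
    finally show ?thesis .
  qed
  have sp: "(a, b) \<in> pair_space n" using la lb by (simp add: pair_space_def vecs_def)
  have "(a, b) \<in> symp_dual n S \<longleftrightarrow> (\<forall>h. symp (a, b) (vec_of n (h * g), vec_of n (h * f)) = 0)"
  proof
    assume "(a, b) \<in> symp_dual n S"
    thus "\<forall>h. symp (a, b) (vec_of n (h * g), vec_of n (h * f)) = 0"
      using C1[OF n G] unfolding symp_dual_def by blast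
  next
    assume H: "\<forall>h. symp (a, b) (vec_of n (h * g), vec_of n (h * f)) = 0"
    have "\<forall>y\<in>S. symp (a, b) y = 0"
    proof
      fix y assume "y \<in> S"
      then obtain c d where y: "y = (c, d)" "(c, d) \<in> S" by (cases y) auto
      then obtain h where "c = vec_of n (h * g)" "d = vec_of n (h * f)" using C2[OF n G] by blast
      thus "symp (a, b) y = 0" using H y by simp
    qed
    thus "(a, b) \<in> symp_dual n S" using sp unfolding symp_dual_def by blast
  qed
  also have "\<dots> \<longleftrightarrow> W mod xn1 n = 0"
  proof
    assume "\<forall>h. symp (a, b) (vec_of n (h * g), vec_of n (h * f)) = 0"
    hence "\<And>h. coeff ((subst_inv n h * W) mod xn1 n) 0 = 0" using sy by simp
    thus "W mod xn1 n = 0" by (rule K_lemma[OF n])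
  next
    assume W0: "W mod xn1 n = 0"
    have "(subst_inv n h * W) mod xn1 n = 0" for h
      by (metis W0 mod_mult_right_eq mult_zero_right mod_0)
    thus "\<forall>h. symp (a, b) (vec_of n (h * g), vec_of n (h * f)) = 0" using sy by simp
  qed
  also have "\<dots> \<longleftrightarrow> (Poly a * subst_inv n f) mod xn1 n = (Poly b * subst_inv n g) mod xn1 n"
    unfolding W_def poly_mod_diff_left by simp
  finally show ?thesis .
qed

theorem mainTheorem5:
  fixes S :: "('a::{finite,field} list \<times> 'a list) set"
    and g f :: "'a poly" and n p :: nat
  assumes "card (UNIV :: 'a set) = p" and "prime p" and "odd p"
    and "n > 0" and "coprime n p"
    and "generating_pair n S g f"
  shows "(totally_isotropic S \<longleftrightarrow>
            (g * subst_inv n f) mod xn1 n = (f * subst_inv n g) mod xn1 n)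
       \<and> (\<forall>a b. length a = n \<longrightarrow> length b = n \<longrightarrow>
            ((a, b) \<in> symp_dual n S \<longleftrightarrow>
             (Poly a * subst_inv n f) mod xn1 n = (Poly b * subst_inv n g) mod xn1 n))"
proof -
  have n: "n > 0" and G: "generating_pair n S g f" using assms by blast+
  have key: "(vec_of n (h * g), vec_of n (h * f)) \<in> symp_dual n S \<longleftrightarrow>
      (h * (g * subst_inv n f)) mod xn1 n = (h * (f * subst_inv n g)) mod xn1 n" for h
  proof -
    have "(vec_of n (h * g), vec_of n (h * f)) \<in> symp_dual n S \<longleftrightarrow>
      (Poly (vec_of n (h * g)) * subst_inv n f) mod xn1 n = (Poly (vec_of n (h * f)) * subst_inv n g) mod xn1 n"
      by (rule C3[OF n G]) simp_all
    also have "\<dots> \<longleftrightarrow> (h * g * subst_inv n f) mod xn1 n = (h * f * subst_inv n g) mod xn1 n"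
      unfolding Poly_vec_of[OF n] mod_mult_left_eq ..
    finally show ?thesis by (simp add: mult.assoc)
  qed
  have TI: "totally_isotropic S \<longleftrightarrow> (g * subst_inv n f) mod xn1 n = (f * subst_inv n g) mod xn1 n"
  proof
    assume T: "totally_isotropic S"
    have "(vec_of n (1 * g), vec_of n (1 * f)) \<in> symp_dual n S"
      using C1[OF n G, of 1] T unfolding totally_isotropic_def symp_dual_def pair_space_def vecs_def
      by auto
    thus "(g * subst_inv n f) mod xn1 n = (f * subst_inv n g) mod xn1 n" using key[of 1] by simp
  next
    assume E: "(g * subst_inv n f) mod xn1 n = (f * subst_inv n g) mod xn1 n"
    show "totally_isotropic S" unfolding totally_isotropic_def
    proof (intro ballI)
      fix x y assume x: "x \<in> S" and y: "y \<in> S"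
      obtain c d where cd: "x = (c, d)" by (cases x)
      then obtain h where h: "c = vec_of n (h * g)" "d = vec_of n (h * f)" using C2[OF n G] x by blast
      have "(h * (g * subst_inv n f)) mod xn1 n = (h * (f * subst_inv n g)) mod xn1 n"
        by (metis E mod_mult_right_eq)
      hence "x \<in> symp_dual n S" using key cd h by simp
      thus "symp x y = 0" using y unfolding symp_dual_def by blast
    qed
  qed
  show ?thesis using TI C3[OF n G] by blast
qed

end
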